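(* Let $\mathcal E_i\equiv1\to H_i\xrightarrow{\alpha_i}G_i\xrightarrow{\beta_i}K_i\to1$ ($i=1,2$) be central extensions of multiplicative Lie algebras that are isoclinic via $(\lambda,\mu)$. Then: (1) $\lambda(\beta_1(x))=\beta_2(\mu(x))$ for all $x\in{}^M[G_1,G_1]$; (2) $\mu({}^M[x,g_1])={}^M[\mu(x),g_2]$ for all $x\in{}^M[G_1,G_1]$, $g_1\in G_1$ and $g_2\in G_2$ with $\lambda(\beta_1(g_1))=\beta_2(g_2)$, where ${}^M[a,b]:=(a\star b)[a,b]$; (3) $\mu(\alpha_1(H_1)\cap{}^M[G_1,G_1])=\alpha_2(H_2)\cap{}^M[G_2,G_2]$.
   Context: A multiplicative Lie algebra is a group $(G,\cdot)$ with a binary operation $\star$ such that for all $x,y,z\in G$: $x\star x=1$; $x\star(yz)=(x\star y)\,{}^y(x\star z)$; $(xy)\star z={}^x(y\star z)(x\star z)$; $((x\star y)\star{}^yz)((y\star z)\star{}^zx)((z\star x)\star{}^xy)=1$; ${}^z(x\star y)={}^zx\star{}^zy$, where ${}^xy=xyx^{-1}$. $Z(G)$ is the group center, $LZ(G)=\{x: x\star y=1\ \forall y\}$, $\mathcal Z(G)=LZ(G)\cap Z(G)$; $[x,y]$ is the group commutator; ${}^M[G,G]=(G\star G)[G,G]$ with $G\star G$ the ideal generated by all $a\star b$. A central extension is a short exact sequence $1\to H\xrightarrow{\alpha}G\xrightarrow{\beta}K\to1$ of multiplicative Lie algebras with $\alpha(H)\subseteq\mathcal Z(G)$. Central extensions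 $\mathcal E_1,\mathcal E_2$ are isoclinic via $(\lambda,\mu)$ if $\lambda:K_1\to K_2$, $\mu:{}^M[G_1,G_1]\to{}^M[G_2,G_2]$ are multiplicative Lie algebra isomorphisms with $\mu([g,g'])=[h,h']$ and $\mu(g\star g')=h\star h'$ whenever $g,g'\in G_1$, $h,h'\in G_2$ satisfy $\beta_2(h)=\lambda\beta_1(g)$, $\beta_2(h')=\lambda\beta_1(g')$. *)

theory Defs
  imports "HOL-Algebra.Algebra"
begin

record 'a mla = "'a monoid" + star :: "'a \<Rightarrow> 'a \<Rightarrow> 'a"

definition conjg :: "('a, 'b) monoid_scheme \<Rightarrow> 'a \<Rightarrow> 'a \<Rightarrow> 'a" where
  "conjg G x y = x \<otimes>\<^bsub>G\<^esub> y \<otimes>\<^bsub>G\<^esub> inv\<^bsub>G\<^esub> x"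

text \<open>Group commutator [x,y] = x y x^-1 y^-1 (same convention as HOL-Algebra's derived subgroup).\<close>
definition gcomm :: "('a, 'b) monoid_scheme \<Rightarrow> 'a \<Rightarrow> 'a \<Rightarrow> 'a" where
  "gcomm G x y = x \<otimes>\<^bsub>G\<^esub> y \<otimes>\<^bsub>G\<^esub> inv\<^bsub>G\<^esub> x \<otimes>\<^bsub>G\<^esub> inv\<^bsub>G\<^esub> y"

definition mult_lie_alg :: "('a, 'b) mla_scheme \<Rightarrow> bool" where
  "mult_lie_alg G \<longleftrightarrow> group G \<and>
     (\<forall>x\<in>carrier G. \<forall>y\<in>carrier G. star G x y \<in> carrier G) \<and>
     (\<forall>x\<in>carrier G. star G x x = \<one>\<^bsub>G\<^esub>) \<and>
     (\<forall>x\<in>carrier G. \<forall>y\<in>carrier G. \<forall>z\<in>carrier G.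
        star G x (y \<otimes>\<^bsub>G\<^esub> z) = star G x y \<otimes>\<^bsub>G\<^esub> conjg G y (star G x z)) \<and>
     (\<forall>x\<in>carrier G. \<forall>y\<in>carrier G. \<forall>z\<in>carrier G.
        star G (x \<otimes>\<^bsub>G\<^esub> y) z = conjg G x (star G y z) \<otimes>\<^bsub>G\<^esub> star G x z) \<and>
     (\<forall>x\<in>carrier G. \<forall>y\<in>carrier G. \<forall>z\<in>carrier G.
        star G (star G x y) (conjg G y z) \<otimes>\<^bsub>G\<^esub> star G (star G y z) (conjg G z x)
          \<otimes>\<^bsub>G\<^esub> star G (star G z x) (conjg G x y) = \<one>\<^bsub>G\<^esub>) \<and>
     (\<forall>x\<in>carrier G. \<forall>y\<in>carrier G. \<forall>z\<in>carrier G.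
        conjg G z (star G x y) = star G (conjg G z x) (conjg G z y))"

definition mla_hom :: "('a, 'c) mla_scheme \<Rightarrow> ('b, 'd) mla_scheme \<Rightarrow> ('a \<Rightarrow> 'b) \<Rightarrow> bool" where
  "mla_hom G K f \<longleftrightarrow> f \<in> hom G K \<and>
     (\<forall>x\<in>carrier G. \<forall>y\<in>carrier G. f (star G x y) = star K (f x) (f y))"

definition mla_iso :: "('a, 'c) mla_scheme \<Rightarrow> ('b, 'd) mla_scheme \<Rightarrow> ('a \<Rightarrow> 'b) \<Rightarrow> bool" where
  "mla_iso G K f \<longleftrightarrow> mla_hom G K f \<and> bij_betw f (carrier G) (carrier K)"

definition mla_ideal :: "('a, 'b) mla_scheme \<Rightarrow> 'a set \<Rightarrow> bool" where
  "mla_ideal G I \<longleftrightarrow> I \<lhd> G \<and> (\<forall>g\<in>carrier G. \<forall>h\<in>I. star G g h \<in> I)"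

definition star_ideal :: "('a, 'b) mla_scheme \<Rightarrow> 'a set" where
  "star_ideal G = \<Inter>{I. mla_ideal G I \<and>
      (\<forall>a\<in>carrier G. \<forall>b\<in>carrier G. star G a b \<in> I)}"

definition Mcomm_sub :: "('a, 'b) mla_scheme \<Rightarrow> 'a set" where
  "Mcomm_sub G = star_ideal G <#>\<^bsub>G\<^esub> derived G (carrier G)"

definition Mcomm_alg :: "('a, 'b) mla_scheme \<Rightarrow> ('a, 'b) mla_scheme" where
  "Mcomm_alg G = G\<lparr>carrier := Mcomm_sub G\<rparr>"

definition Mbr :: "('a, 'b) mla_scheme \<Rightarrow> 'a \<Rightarrow> 'a \<Rightarrow> 'a" where
  "Mbr G a b = star G a b \<otimes>\<^bsub>G\<^esub> gcomm G a b"

definition lie_center :: "('a, 'b) mla_scheme \<Rightarrow> 'a set" where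
  "lie_center G = {x \<in> carrier G. \<forall>y\<in>carrier G. star G x y = \<one>\<^bsub>G\<^esub>}"

definition group_center :: "('a, 'b) monoid_scheme \<Rightarrow> 'a set" where
  "group_center G = {x \<in> carrier G. \<forall>y\<in>carrier G. x \<otimes>\<^bsub>G\<^esub> y = y \<otimes>\<^bsub>G\<^esub> x}"

definition mla_center :: "('a, 'b) mla_scheme \<Rightarrow> 'a set" where
  "mla_center G = lie_center G \<inter> group_center G"

definition central_extension ::
  "('h, 'x) mla_scheme \<Rightarrow> ('g, 'y) mla_scheme \<Rightarrow> ('k, 'z) mla_scheme
    \<Rightarrow> ('h \<Rightarrow> 'g) \<Rightarrow> ('g \<Rightarrow> 'k) \<Rightarrow> bool" where
  "central_extension H G K \<alpha> \<beta> \<longleftrightarrow>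
     mult_lie_alg H \<and> mult_lie_alg G \<and> mult_lie_alg K \<and>
     mla_hom H G \<alpha> \<and> mla_hom G K \<beta> \<and>
     inj_on \<alpha> (carrier H) \<and>
     \<alpha> ` carrier H = {g \<in> carrier G. \<beta> g = \<one>\<^bsub>K\<^esub>} \<and>
     \<beta> ` carrier G = carrier K \<and>
     \<alpha> ` carrier H \<subseteq> mla_center G"

definition isoclinic_via ::
  "('h1, 'x1) mla_scheme \<Rightarrow> ('g1, 'y1) mla_scheme \<Rightarrow> ('k1, 'z1) mla_scheme
    \<Rightarrow> ('h1 \<Rightarrow> 'g1) \<Rightarrow> ('g1 \<Rightarrow> 'k1) \<Rightarrow>
   ('h2, 'x2) mla_scheme \<Rightarrow> ('g2, 'y2) mla_scheme \<Rightarrow> ('k2, 'z2) mla_scheme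
    \<Rightarrow> ('h2 \<Rightarrow> 'g2) \<Rightarrow> ('g2 \<Rightarrow> 'k2) \<Rightarrow>
   ('k1 \<Rightarrow> 'k2) \<Rightarrow> ('g1 \<Rightarrow> 'g2) \<Rightarrow> bool" where
  "isoclinic_via H1 G1 K1 \<alpha>1 \<beta>1 H2 G2 K2 \<alpha>2 \<beta>2 \<Lambda> \<mu> \<longleftrightarrow>
     central_extension H1 G1 K1 \<alpha>1 \<beta>1 \<and> central_extension H2 G2 K2 \<alpha>2 \<beta>2 \<and>
     mla_iso K1 K2 \<Lambda> \<and> mla_iso (Mcomm_alg G1) (Mcomm_alg G2) \<mu> \<and>
     (\<forall>g\<in>carrier G1. \<forall>g'\<in>carrier G1. \<forall>h\<in>carrier G2. \<forall>h'\<in>carrier G2.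
        \<beta>2 h = \<Lambda> (\<beta>1 g) \<longrightarrow> \<beta>2 h' = \<Lambda> (\<beta>1 g') \<longrightarrow>
        \<mu> (gcomm G1 g g') = gcomm G2 h h' \<and> \<mu> (star G1 g g') = star G2 h h')"

end

theory Submission
  imports Defs
begin

lemma mla_group: "mult_lie_alg G \<Longrightarrow> group G"
  unfolding mult_lie_alg_def by blast

lemma mla_star_closed: "mult_lie_alg G \<Longrightarrow> x \<in> carrier G \<Longrightarrow> y \<in> carrier G \<Longrightarrow> star G x y \<in> carrier G"
  unfolding mult_lie_alg_def by blast

lemma mla_star_mult: "mult_lie_alg G \<Longrightarrow> x \<in> carrier G \<Longrightarrow> y \<in> carrier G \<Longrightarrow> z \<in> carrier G \<Longrightarrow>
   star G x (y \<otimes>\<^bsub>G\<^esub> z) = star G x y \<otimes>\<^bsub>G\<^esub> conjg G y (star G x z)"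
  unfolding mult_lie_alg_def by blast

lemma mla_conj_star: "mult_lie_alg G \<Longrightarrow> x \<in> carrier G \<Longrightarrow> y \<in> carrier G \<Longrightarrow> z \<in> carrier G \<Longrightarrow>
   conjg G z (star G x y) = star G (conjg G z x) (conjg G z y)"
  unfolding mult_lie_alg_def by blast

lemma conjg_closed: "group G \<Longrightarrow> x \<in> carrier G \<Longrightarrow> y \<in> carrier G \<Longrightarrow> conjg G x y \<in> carrier G"
  unfolding conjg_def by (simp add: group.subgroup_self subgroup.m_closed subgroup.m_inv_closed)

lemma mla_star_one:
  assumes "mult_lie_alg G" "x \<in> carrier G"
  shows "star G x \<one>\<^bsub>G\<^esub> = \<one>\<^bsub>G\<^esub>"
proof -
  have grp: "group G" using mla_group[OF assms(1)] .
  let ?a = "star G x \<one>\<^bsub>G\<^esub>"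
  have o: "\<one>\<^bsub>G\<^esub> \<in> carrier G" by (rule monoid.one_closed[OF group.is_monoid[OF grp]])
  have a: "?a \<in> carrier G" by (rule mla_star_closed[OF assms o])
  have e: "star G x (\<one>\<^bsub>G\<^esub> \<otimes>\<^bsub>G\<^esub> \<one>\<^bsub>G\<^esub>) = ?a \<otimes>\<^bsub>G\<^esub> conjg G \<one>\<^bsub>G\<^esub> ?a"
    by (rule mla_star_mult[OF assms(1,2) o o])
  have oo: "\<one>\<^bsub>G\<^esub> \<otimes>\<^bsub>G\<^esub> \<one>\<^bsub>G\<^esub> = \<one>\<^bsub>G\<^esub>" by (rule monoid.l_one[OF group.is_monoid[OF grp] o])
  have cj: "conjg G \<one>\<^bsub>G\<^esub> ?a = ?a" unfolding conjg_def using a grp by (simp add: monoid.inv_one group.is_monoid)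
  have c: "?a = ?a \<otimes>\<^bsub>G\<^esub> ?a" using e unfolding oo cj .
  show ?thesis using group.l_cancel_one'[OF grp a a] c by blast
qed

lemma (in group) conjg_inv_conjg:
  assumes "s \<in> carrier G" "b \<in> carrier G"
  shows "conjg G (inv s) (conjg G s b) = b"
proof -
  show ?thesis
    unfolding conjg_def using assms by (simp add: m_assoc, simp add: m_assoc[symmetric])
qed

lemma mla_star_inv:
  assumes "mult_lie_alg G" "x \<in> carrier G" "s \<in> carrier G"
  shows "star G x (inv\<^bsub>G\<^esub> s) = conjg G (inv\<^bsub>G\<^esub> s) (inv\<^bsub>G\<^esub> (star G x s))"
proof -
  have grp: "group G" using mla_group[OF assms(1)] .
  have si: "inv\<^bsub>G\<^esub> s \<in> carrier G" by (rule group.inv_closed[OF grp assms(3)])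
  let ?b = "star G x (inv\<^bsub>G\<^esub> s)" and ?a = "star G x s"
  have a: "?a \<in> carrier G" by (rule mla_star_closed[OF assms])
  have b: "?b \<in> carrier G" by (rule mla_star_closed[OF assms(1,2) si])
  have cb: "conjg G s ?b \<in> carrier G" by (rule conjg_closed[OF grp assms(3) b])
  have e: "star G x (s \<otimes>\<^bsub>G\<^esub> inv\<^bsub>G\<^esub> s) = ?a \<otimes>\<^bsub>G\<^esub> conjg G s ?b"
    by (rule mla_star_mult[OF assms(1,2,3) si])
  have e1: "star G x (s \<otimes>\<^bsub>G\<^esub> inv\<^bsub>G\<^esub> s) = \<one>\<^bsub>G\<^esub>"
    unfolding group.r_inv[OF grp assms(3)] by (rule mla_star_one[OF assms(1,2)])
  have e2: "?a \<otimes>\<^bsub>G\<^esub> conjg G s ?b = \<one>\<^bsub>G\<^esub>" using trans[OF sym[OF e] e1] .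
  have "inv\<^bsub>G\<^esub> (conjg G s ?b) = ?a" by (rule group.inv_equality[OF grp e2 cb a])
  hence "inv\<^bsub>G\<^esub> (inv\<^bsub>G\<^esub> (conjg G s ?b)) = inv\<^bsub>G\<^esub> ?a" by (rule arg_cong)
  hence "conjg G s ?b = inv\<^bsub>G\<^esub> ?a" unfolding group.inv_inv[OF grp cb] .
  hence A: "conjg G (inv\<^bsub>G\<^esub> s) (conjg G s ?b) = conjg G (inv\<^bsub>G\<^esub> s) (inv\<^bsub>G\<^esub> ?a)" by (rule arg_cong)
  have B: "conjg G (inv\<^bsub>G\<^esub> s) (conjg G s ?b) = ?b"
    by (rule group.conjg_inv_conjg[OF grp assms(3) b])
  show ?thesis using trans[OF sym[OF B] A] .
qed

definition stars :: "('a, 'b) mla_scheme \<Rightarrow> 'a set" where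
  "stars G = {star G a b | a b. a \<in> carrier G \<and> b \<in> carrier G}"

lemma star_in_stars: "a \<in> carrier G \<Longrightarrow> b \<in> carrier G \<Longrightarrow> star G a b \<in> stars G"
  unfolding stars_def by blast

lemma stars_carrier: "mult_lie_alg G \<Longrightarrow> stars G \<subseteq> carrier G"
proof
  fix y assume "mult_lie_alg G" "y \<in> stars G"
  then show "y \<in> carrier G" unfolding stars_def using mla_star_closed by auto
qed

lemma gen_stars_normal:
  assumes "mult_lie_alg G" shows "generate G (stars G) \<lhd> G"
proof -
  have grp: "group G" using mla_group[OF assms(1)] .
  show ?thesis
  proof (rule group.normal_generateI[OF grp stars_carrier[OF assms]])
    fix h g assume h: "h \<in> stars G" and g: "g \<in> carrier G"
    from h obtain a b where ab: "a \<in> carrier G" "b \<in> carrier G" "h = star G a b" unfolding stars_def by auto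
    have "g \<otimes>\<^bsub>G\<^esub> h \<otimes>\<^bsub>G\<^esub> inv\<^bsub>G\<^esub> g = conjg G g h" unfolding conjg_def by (rule refl)
    also have "\<dots> = star G (conjg G g a) (conjg G g b)"
      unfolding ab(3) by (rule mla_conj_star[OF assms ab(1,2) g])
    finally have e: "g \<otimes>\<^bsub>G\<^esub> h \<otimes>\<^bsub>G\<^esub> inv\<^bsub>G\<^esub> g = star G (conjg G g a) (conjg G g b)" .
    have c: "conjg G g a \<in> carrier G" "conjg G g b \<in> carrier G"
      using conjg_closed[OF grp g] ab by auto
    show "g \<otimes>\<^bsub>G\<^esub> h \<otimes>\<^bsub>G\<^esub> inv\<^bsub>G\<^esub> g \<in> stars G" unfolding stars_def e
      using c by blast
  qed
qed

lemma gen_stars_star: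
  assumes "mult_lie_alg G" "g \<in> carrier G" "h \<in> generate G (stars G)"
  shows "star G g h \<in> generate G (stars G)"
  using assms(3)
proof (induct h rule: generate.induct)
  case one
  have "star G g \<one>\<^bsub>G\<^esub> = \<one>\<^bsub>G\<^esub>" by (rule mla_star_one[OF assms(1,2)])
  then show ?case using generate.one by simp
next
  case (incl h)
  have "h \<in> carrier G" using incl stars_carrier[OF assms(1)] by blast
  then have "star G g h \<in> stars G" by (rule star_in_stars[OF assms(2)])
  then show ?case by (rule generate.incl)
next
  case (inv h)
  have grp: "group G" using mla_group[OF assms(1)] .
  have N: "generate G (stars G) \<lhd> G" by (rule gen_stars_normal[OF assms(1)])
  have hc: "h \<in> carrier G" using inv stars_carrier[OF assms(1)] by blast
  have "star G g h \<in> stars G" by (rule star_in_stars[OF assms(2) hc])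
  hence "star G g h \<in> generate G (stars G)" by (rule generate.incl)
  hence "inv\<^bsub>G\<^esub> (star G g h) \<in> generate G (stars G)"
    by (rule subgroup.m_inv_closed[OF normal_imp_subgroup[OF N]])
  hence "conjg G (inv\<^bsub>G\<^esub> h) (inv\<^bsub>G\<^esub> (star G g h)) \<in> generate G (stars G)"
    unfolding conjg_def group.inv_inv[OF grp hc] by (rule normal.inv_op_closed1[OF N hc])
  then show ?case unfolding mla_star_inv[OF assms(1,2) hc] .
next
  case (eng h1 h2)
  have grp: "group G" using mla_group[OF assms(1)] .
  have N: "generate G (stars G) \<lhd> G" by (rule gen_stars_normal[OF assms(1)])
  have c: "h1 \<in> carrier G" "h2 \<in> carrier G"
    using eng group.generate_in_carrier[OF grp stars_carrier[OF assms(1)]] by blast+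
  have "conjg G h1 (star G g h2) \<in> generate G (stars G)"
    unfolding conjg_def by (rule normal.inv_op_closed2[OF N c(1) eng(4)])
  then show ?case unfolding mla_star_mult[OF assms(1,2) c]
    by (rule subgroup.m_closed[OF normal_imp_subgroup[OF N] eng(2)])
qed

lemma star_ideal_eq:
  assumes "mult_lie_alg G" shows "star_ideal G = generate G (stars G)"
proof -
  have grp: "group G" using mla_group[OF assms(1)] .
  have I: "mla_ideal G (generate G (stars G))" unfolding mla_ideal_def
    using gen_stars_normal[OF assms] gen_stars_star[OF assms] by blast
  have "\<forall>a\<in>carrier G. \<forall>b\<in>carrier G. star G a b \<in> generate G (stars G)"
    using star_in_stars generate.incl by metis
  hence "star_ideal G \<subseteq> generate G (stars G)" unfolding star_ideal_def using I by blast
  moreover have "generate G (stars G) \<subseteq> star_ideal G"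
    unfolding star_ideal_def
  proof (rule Inter_greatest)
    fix I assume "I \<in> {I. mla_ideal G I \<and> (\<forall>a\<in>carrier G. \<forall>b\<in>carrier G. star G a b \<in> I)}"
    hence "I \<lhd> G" "stars G \<subseteq> I" unfolding mla_ideal_def stars_def by auto
    thus "generate G (stars G) \<subseteq> I" using group.generate_subgroup_incl[OF grp] normal_imp_subgroup by blast
  qed
  ultimately show ?thesis by (rule antisym)
qed

lemma Mcomm_normal:
  assumes "mult_lie_alg G" shows "Mcomm_sub G \<lhd> G"
proof -
  have grp: "group G" using mla_group[OF assms(1)] .
  show ?thesis unfolding Mcomm_sub_def star_ideal_eq[OF assms]
    by (rule group.normal_subgroup_set_mult_closed[OF grp gen_stars_normal[OF assms]
          group.derived_is_normal[OF grp group.normal_self[OF grp]]])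
qed

lemma Mcomm_subgroup: "mult_lie_alg G \<Longrightarrow> subgroup (Mcomm_sub G) G"
  by (rule normal_imp_subgroup[OF Mcomm_normal])

lemma in_set_mult: "h \<in> H \<Longrightarrow> k \<in> K \<Longrightarrow> h \<otimes>\<^bsub>G\<^esub> k \<in> H <#>\<^bsub>G\<^esub> K"
  unfolding set_mult_def by blast

lemma star_ideal_sub:
  assumes "mult_lie_alg G" shows "star_ideal G \<subseteq> Mcomm_sub G"
proof
  fix x assume x: "x \<in> star_ideal G"
  have grp: "group G" using mla_group[OF assms(1)] .
  have "\<one>\<^bsub>G\<^esub> \<in> derived G (carrier G)" unfolding derived_def by (rule generate.one)
  moreover have "x \<in> carrier G" using x unfolding star_ideal_eq[OF assms]
    using group.generate_in_carrier[OF grp stars_carrier[OF assms]] by blast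
  hence "x \<otimes>\<^bsub>G\<^esub> \<one>\<^bsub>G\<^esub> = x" by (rule monoid.r_one[OF group.is_monoid[OF grp]])
  moreover have "x \<otimes>\<^bsub>G\<^esub> \<one>\<^bsub>G\<^esub> \<in> Mcomm_sub G" unfolding Mcomm_sub_def
    using in_set_mult[OF x calculation(1)] .
  ultimately show "x \<in> Mcomm_sub G" by simp
qed

lemma derived_sub:
  assumes "mult_lie_alg G" shows "derived G (carrier G) \<subseteq> Mcomm_sub G"
proof
  fix x assume x: "x \<in> derived G (carrier G)"
  have grp: "group G" using mla_group[OF assms(1)] .
  have "\<one>\<^bsub>G\<^esub> \<in> star_ideal G" unfolding star_ideal_eq[OF assms] by (rule generate.one)
  moreover have "x \<in> carrier G" using x group.derived_in_carrier[OF grp] by blast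
  hence "\<one>\<^bsub>G\<^esub> \<otimes>\<^bsub>G\<^esub> x = x" by (rule monoid.l_one[OF group.is_monoid[OF grp]])
  moreover have "\<one>\<^bsub>G\<^esub> \<otimes>\<^bsub>G\<^esub> x \<in> Mcomm_sub G" unfolding Mcomm_sub_def
    using in_set_mult[OF calculation(1) x] .
  ultimately show "x \<in> Mcomm_sub G" by simp
qed

lemma star_in_M: "mult_lie_alg G \<Longrightarrow> a \<in> carrier G \<Longrightarrow> b \<in> carrier G \<Longrightarrow> star G a b \<in> Mcomm_sub G"
  using star_ideal_sub[of G] star_ideal_eq[of G] star_in_stars[of a G b] generate.incl[of _ "stars G" G] by auto

lemma gcomm_in_M:
  assumes "mult_lie_alg G" "a \<in> carrier G" "b \<in> carrier G" shows "gcomm G a b \<in> Mcomm_sub G"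
proof -
  have "gcomm G a b \<in> derived_set G (carrier G)" unfolding gcomm_def using assms(2,3) by blast
  hence "gcomm G a b \<in> derived G (carrier G)" unfolding derived_def by (rule generate.incl)
  thus ?thesis using derived_sub[OF assms(1)] by blast
qed

lemma hom_gcomm:
  assumes "group G" "group K" "f \<in> hom G K" "x \<in> carrier G" "y \<in> carrier G"
  shows "f (gcomm G x y) = gcomm K (f x) (f y)"
proof -
  have gh: "group_hom G K f" using assms by (simp add: group_hom_def group_hom_axioms_def)
  show ?thesis unfolding gcomm_def using assms
    by (simp add: group_hom.hom_mult[OF gh] group_hom.hom_inv[OF gh] group.inv_closed group.is_monoid monoid.m_closed)
qed


lemma Mcomm_alg_simps:
  "carrier (Mcomm_alg G) = Mcomm_sub G"
  "monoid.mult (Mcomm_alg G) = monoid.mult G"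
  "monoid.one (Mcomm_alg G) = monoid.one G"
  "star (Mcomm_alg G) = star G"
  unfolding Mcomm_alg_def by simp_all

lemma set_mult_elim:
  assumes "x \<in> H <#>\<^bsub>G\<^esub> K"
  obtains h k where "h \<in> H" "k \<in> K" "x = h \<otimes>\<^bsub>G\<^esub> k"
  using assms unfolding set_mult_def by blast

lemma ghom: "group G \<Longrightarrow> group K \<Longrightarrow> f \<in> hom G K \<Longrightarrow> group_hom G K f"
  by (simp add: group_hom_def group_hom_axioms_def)

theorem lemma4p2:
  fixes H1 :: "('h1, 'x1) mla_scheme" and G1 :: "('g1, 'y1) mla_scheme"
    and K1 :: "('k1, 'z1) mla_scheme"
    and H2 :: "('h2, 'x2) mla_scheme" and G2 :: "('g2, 'y2) mla_scheme"
    and K2 :: "('k2, 'z2) mla_scheme"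
    and \<alpha>1 :: "'h1 \<Rightarrow> 'g1" and \<beta>1 :: "'g1 \<Rightarrow> 'k1"
    and \<alpha>2 :: "'h2 \<Rightarrow> 'g2" and \<beta>2 :: "'g2 \<Rightarrow> 'k2"
    and \<Lambda> :: "'k1 \<Rightarrow> 'k2" and \<mu> :: "'g1 \<Rightarrow> 'g2"
  assumes "isoclinic_via H1 G1 K1 \<alpha>1 \<beta>1 H2 G2 K2 \<alpha>2 \<beta>2 \<Lambda> \<mu>"
  shows "(\<forall>x\<in>Mcomm_sub G1. \<Lambda> (\<beta>1 x) = \<beta>2 (\<mu> x)) \<and>
         (\<forall>x\<in>Mcomm_sub G1. \<forall>g1\<in>carrier G1. \<forall>g2\<in>carrier G2.
            \<Lambda> (\<beta>1 g1) = \<beta>2 g2 \<longrightarrow> \<mu> (Mbr G1 x g1) = Mbr G2 (\<mu> x) g2) \<and>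
         \<mu> ` (\<alpha>1 ` carrier H1 \<inter> Mcomm_sub G1) = \<alpha>2 ` carrier H2 \<inter> Mcomm_sub G2"
proof -
  have ce1: "central_extension H1 G1 K1 \<alpha>1 \<beta>1" and ce2: "central_extension H2 G2 K2 \<alpha>2 \<beta>2"
    and isoK: "mla_iso K1 K2 \<Lambda>" and isoM: "mla_iso (Mcomm_alg G1) (Mcomm_alg G2) \<mu>"
    and cond: "\<And>g g' h h'. g\<in>carrier G1 \<Longrightarrow> g'\<in>carrier G1 \<Longrightarrow> h\<in>carrier G2 \<Longrightarrow> h'\<in>carrier G2 \<Longrightarrow>
        \<beta>2 h = \<Lambda> (\<beta>1 g) \<Longrightarrow> \<beta>2 h' = \<Lambda> (\<beta>1 g') \<Longrightarrow>
        \<mu> (gcomm G1 g g') = gcomm G2 h h' \<and> \<mu> (star G1 g g') = star G2 h h'"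
    using assms unfolding isoclinic_via_def by blast+
  have mG1: "mult_lie_alg G1" and mK1: "mult_lie_alg K1" and b1h: "mla_hom G1 K1 \<beta>1"
    and ker1: "\<alpha>1 ` carrier H1 = {g \<in> carrier G1. \<beta>1 g = \<one>\<^bsub>K1\<^esub>}"
    using ce1 unfolding central_extension_def by blast+
  have mG2: "mult_lie_alg G2" and mK2: "mult_lie_alg K2" and b2h: "mla_hom G2 K2 \<beta>2"
    and ker2: "\<alpha>2 ` carrier H2 = {g \<in> carrier G2. \<beta>2 g = \<one>\<^bsub>K2\<^esub>}"
    and surj2: "\<beta>2 ` carrier G2 = carrier K2"
    using ce2 unfolding central_extension_def by blast+
  have gG1: "group G1" and gG2: "group G2" and gK1: "group K1" and gK2: "group K2"
    using mG1 mG2 mK1 mK2 mla_group by blast+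
  have Lh: "mla_hom K1 K2 \<Lambda>" and Lbij: "bij_betw \<Lambda> (carrier K1) (carrier K2)"
    using isoK unfolding mla_iso_def by blast+
  have b1hom: "\<beta>1 \<in> hom G1 K1" and b1star: "\<And>x y. x \<in> carrier G1 \<Longrightarrow> y \<in> carrier G1 \<Longrightarrow> \<beta>1 (star G1 x y) = star K1 (\<beta>1 x) (\<beta>1 y)"
    using b1h unfolding mla_hom_def by blast+
  have b2hom: "\<beta>2 \<in> hom G2 K2" and b2star: "\<And>x y. x \<in> carrier G2 \<Longrightarrow> y \<in> carrier G2 \<Longrightarrow> \<beta>2 (star G2 x y) = star K2 (\<beta>2 x) (\<beta>2 y)"
    using b2h unfolding mla_hom_def by blast+
  have Lhom: "\<Lambda> \<in> hom K1 K2" and Lstar: "\<And>x y. x \<in> carrier K1 \<Longrightarrow> y \<in> carrier K1 \<Longrightarrow> \<Lambda> (star K1 x y) = star K2 (\<Lambda> x) (\<Lambda> y)"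
    using Lh unfolding mla_hom_def by blast+
  have muhom: "\<mu> \<in> hom (Mcomm_alg G1) (Mcomm_alg G2)" and mubij: "bij_betw \<mu> (Mcomm_sub G1) (Mcomm_sub G2)"
    using isoM unfolding mla_iso_def mla_hom_def Mcomm_alg_simps by blast+
  have muC: "\<And>x. x \<in> Mcomm_sub G1 \<Longrightarrow> \<mu> x \<in> Mcomm_sub G2"
    using hom_in_carrier[OF muhom] unfolding Mcomm_alg_simps by blast
  have muM: "\<And>x y. x \<in> Mcomm_sub G1 \<Longrightarrow> y \<in> Mcomm_sub G1 \<Longrightarrow> \<mu> (x \<otimes>\<^bsub>G1\<^esub> y) = \<mu> x \<otimes>\<^bsub>G2\<^esub> \<mu> y"
  proof -
    fix x y assume "x \<in> Mcomm_sub G1" "y \<in> Mcomm_sub G1"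
    thus "\<mu> (x \<otimes>\<^bsub>G1\<^esub> y) = \<mu> x \<otimes>\<^bsub>G2\<^esub> \<mu> y"
      using hom_mult[OF muhom, of x y] unfolding Mcomm_alg_simps monoid.simps(1)[symmetric] by simp
  qed
  have sM1: "subgroup (Mcomm_sub G1) G1" and sM2: "subgroup (Mcomm_sub G2) G2"
    using Mcomm_subgroup mG1 mG2 by blast+
  have M2C: "Mcomm_sub G2 \<subseteq> carrier G2" by (rule subgroup.subset[OF sM2])
  have M1C: "Mcomm_sub G1 \<subseteq> carrier G1" by (rule subgroup.subset[OF sM1])
  have gb1: "group_hom G1 K1 \<beta>1" by (rule ghom[OF gG1 gK1 b1hom])
  have gb2: "group_hom G2 K2 \<beta>2" by (rule ghom[OF gG2 gK2 b2hom])
  have gL: "group_hom K1 K2 \<Lambda>" by (rule ghom[OF gK1 gK2 Lhom])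
  have mu1: "\<mu> \<one>\<^bsub>G1\<^esub> = \<one>\<^bsub>G2\<^esub>"
  proof -
    have o1: "\<one>\<^bsub>G1\<^esub> \<in> Mcomm_sub G1" by (rule subgroup.one_closed[OF sM1])
    have c: "\<mu> \<one>\<^bsub>G1\<^esub> \<in> carrier G2" using muC[OF o1] M2C by blast
    have "\<mu> \<one>\<^bsub>G1\<^esub> = \<mu> (\<one>\<^bsub>G1\<^esub> \<otimes>\<^bsub>G1\<^esub> \<one>\<^bsub>G1\<^esub>)"
      using monoid.l_one[OF group.is_monoid[OF gG1] monoid.one_closed[OF group.is_monoid[OF gG1]]] by simp
    also have "\<dots> = \<mu> \<one>\<^bsub>G1\<^esub> \<otimes>\<^bsub>G2\<^esub> \<mu> \<one>\<^bsub>G1\<^esub>" by (rule muM[OF o1 o1])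
    finally show ?thesis using group.l_cancel_one'[OF gG2 c c] by blast
  qed
  have muinv: "\<And>x. x \<in> Mcomm_sub G1 \<Longrightarrow> \<mu> (inv\<^bsub>G1\<^esub> x) = inv\<^bsub>G2\<^esub> (\<mu> x)"
  proof -
    fix x assume x: "x \<in> Mcomm_sub G1"
    have ix: "inv\<^bsub>G1\<^esub> x \<in> Mcomm_sub G1" by (rule subgroup.m_inv_closed[OF sM1 x])
    have xc: "x \<in> carrier G1" using x M1C by blast
    have "\<mu> (inv\<^bsub>G1\<^esub> x) \<otimes>\<^bsub>G2\<^esub> \<mu> x = \<mu> (inv\<^bsub>G1\<^esub> x \<otimes>\<^bsub>G1\<^esub> x)" by (rule muM[OF ix x, symmetric])
    also have "\<dots> = \<one>\<^bsub>G2\<^esub>" unfolding group.l_inv[OF gG1 xc] by (rule mu1)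
    finally have e: "\<mu> (inv\<^bsub>G1\<^esub> x) \<otimes>\<^bsub>G2\<^esub> \<mu> x = \<one>\<^bsub>G2\<^esub>" .
    show "\<mu> (inv\<^bsub>G1\<^esub> x) = inv\<^bsub>G2\<^esub> (\<mu> x)"
      using group.inv_equality[OF gG2 e] muC[OF x] muC[OF ix] M2C by (metis subsetD)
  qed
  have lift: "\<And>g. g \<in> carrier G1 \<Longrightarrow> \<exists>h\<in>carrier G2. \<beta>2 h = \<Lambda> (\<beta>1 g)"
  proof -
    fix g assume g: "g \<in> carrier G1"
    have "\<Lambda> (\<beta>1 g) \<in> carrier K2" using hom_in_carrier[OF Lhom hom_in_carrier[OF b1hom g]] .
    then show "\<exists>h\<in>carrier G2. \<beta>2 h = \<Lambda> (\<beta>1 g)" using surj2 by (metis imageE)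
  qed
  define T where "T = {x \<in> Mcomm_sub G1. \<Lambda> (\<beta>1 x) = \<beta>2 (\<mu> x)}"
  have TC: "T \<subseteq> carrier G1" unfolding T_def using M1C by blast
  have Tsub: "subgroup T G1"
  proof (rule group.subgroupI[OF gG1 TC])
    have "\<one>\<^bsub>G1\<^esub> \<in> T" unfolding T_def using subgroup.one_closed[OF sM1]
      group_hom.hom_one[OF gb1] group_hom.hom_one[OF gb2] group_hom.hom_one[OF gL] mu1 by simp
    thus "T \<noteq> {}" by blast
  next
    fix a assume a: "a \<in> T"
    hence aM: "a \<in> Mcomm_sub G1" and ae: "\<Lambda> (\<beta>1 a) = \<beta>2 (\<mu> a)" unfolding T_def by blast+
    have ac: "a \<in> carrier G1" using aM M1C by blast
    have mac: "\<mu> a \<in> carrier G2" using muC[OF aM] M2C by blast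
    have "\<Lambda> (\<beta>1 (inv\<^bsub>G1\<^esub> a)) = inv\<^bsub>K2\<^esub> (\<Lambda> (\<beta>1 a))"
      using group_hom.hom_inv[OF gb1 ac] group_hom.hom_inv[OF gL hom_in_carrier[OF b1hom ac]] by simp
    also have "\<dots> = inv\<^bsub>K2\<^esub> (\<beta>2 (\<mu> a))" using ae by simp
    also have "\<dots> = \<beta>2 (\<mu> (inv\<^bsub>G1\<^esub> a))" using muinv[OF aM] group_hom.hom_inv[OF gb2 mac] by simp
    finally show "inv\<^bsub>G1\<^esub> a \<in> T" unfolding T_def using subgroup.m_inv_closed[OF sM1 aM] by blast
  next
    fix a b assume a: "a \<in> T" and b: "b \<in> T"
    hence aM: "a \<in> Mcomm_sub G1" and ae: "\<Lambda> (\<beta>1 a) = \<beta>2 (\<mu> a)"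
      and bM: "b \<in> Mcomm_sub G1" and be: "\<Lambda> (\<beta>1 b) = \<beta>2 (\<mu> b)" unfolding T_def by blast+
    have ac: "a \<in> carrier G1" using aM M1C by blast
    have bc: "b \<in> carrier G1" using bM M1C by blast
    have mac: "\<mu> a \<in> carrier G2" using muC[OF aM] M2C by blast
    have mbc: "\<mu> b \<in> carrier G2" using muC[OF bM] M2C by blast
    have "\<Lambda> (\<beta>1 (a \<otimes>\<^bsub>G1\<^esub> b)) = \<Lambda> (\<beta>1 a) \<otimes>\<^bsub>K2\<^esub> \<Lambda> (\<beta>1 b)"
      using hom_mult[OF b1hom ac bc] hom_mult[OF Lhom hom_in_carrier[OF b1hom ac] hom_in_carrier[OF b1hom bc]] by simp
    also have "\<dots> = \<beta>2 (\<mu> a) \<otimes>\<^bsub>K2\<^esub> \<beta>2 (\<mu> b)" using ae be by simp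
    also have "\<dots> = \<beta>2 (\<mu> (a \<otimes>\<^bsub>G1\<^esub> b))" using muM[OF aM bM] hom_mult[OF b2hom mac mbc] by simp
    finally show "a \<otimes>\<^bsub>G1\<^esub> b \<in> T" unfolding T_def using subgroup.m_closed[OF sM1 aM bM] by blast
  qed
  have gens: "\<And>g g'. g \<in> carrier G1 \<Longrightarrow> g' \<in> carrier G1 \<Longrightarrow> star G1 g g' \<in> T \<and> gcomm G1 g g' \<in> T"
  proof -
    fix g g' assume g: "g \<in> carrier G1" and g': "g' \<in> carrier G1"
    obtain h where h: "h \<in> carrier G2" "\<beta>2 h = \<Lambda> (\<beta>1 g)" using lift[OF g] by blast
    obtain h' where h': "h' \<in> carrier G2" "\<beta>2 h' = \<Lambda> (\<beta>1 g')" using lift[OF g'] by blast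
    have c: "\<mu> (gcomm G1 g g') = gcomm G2 h h'" "\<mu> (star G1 g g') = star G2 h h'"
      using cond[OF g g' h(1) h'(1) h(2) h'(2)] by blast+
    have bg: "\<beta>1 g \<in> carrier K1" "\<beta>1 g' \<in> carrier K1"
      using hom_in_carrier[OF b1hom] g g' by blast+
    have "\<Lambda> (\<beta>1 (star G1 g g')) = star K2 (\<Lambda> (\<beta>1 g)) (\<Lambda> (\<beta>1 g'))"
      using b1star[OF g g'] Lstar[OF bg] by simp
    also have "\<dots> = \<beta>2 (\<mu> (star G1 g g'))" using c(2) b2star[OF h(1) h'(1)] h(2) h'(2) by simp
    finally have s: "\<Lambda> (\<beta>1 (star G1 g g')) = \<beta>2 (\<mu> (star G1 g g'))" .
    have "\<Lambda> (\<beta>1 (gcomm G1 g g')) = gcomm K2 (\<Lambda> (\<beta>1 g)) (\<Lambda> (\<beta>1 g'))"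
      using hom_gcomm[OF gG1 gK1 b1hom g g'] hom_gcomm[OF gK1 gK2 Lhom bg] by simp
    also have "\<dots> = \<beta>2 (\<mu> (gcomm G1 g g'))" using c(1) hom_gcomm[OF gG2 gK2 b2hom h(1) h'(1)] h(2) h'(2) by simp
    finally have t: "\<Lambda> (\<beta>1 (gcomm G1 g g')) = \<beta>2 (\<mu> (gcomm G1 g g'))" .
    show "star G1 g g' \<in> T \<and> gcomm G1 g g' \<in> T" unfolding T_def
      using s t star_in_M[OF mG1 g g'] gcomm_in_M[OF mG1 g g'] by blast
  qed
  have "stars G1 \<subseteq> T" unfolding stars_def using gens by blast
  hence SI: "star_ideal G1 \<subseteq> T" unfolding star_ideal_eq[OF mG1]
    by (rule group.generate_subgroup_incl[OF gG1 _ Tsub])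
  have "derived_set G1 (carrier G1) \<subseteq> T"
  proof
    fix x assume "x \<in> derived_set G1 (carrier G1)"
    then obtain g g' where "g \<in> carrier G1" "g' \<in> carrier G1" "x = gcomm G1 g g'"
      unfolding gcomm_def by blast
    thus "x \<in> T" using gens by blast
  qed
  hence DI: "derived G1 (carrier G1) \<subseteq> T" unfolding derived_def
    by (rule group.generate_subgroup_incl[OF gG1 _ Tsub])
  have MT: "Mcomm_sub G1 \<subseteq> T"
  proof
    fix x assume "x \<in> Mcomm_sub G1"
    then obtain a b where ab: "a \<in> star_ideal G1" "b \<in> derived G1 (carrier G1)" "x = a \<otimes>\<^bsub>G1\<^esub> b"
      unfolding Mcomm_sub_def by (rule set_mult_elim)
    show "x \<in> T" unfolding ab(3) using subgroup.m_closed[OF Tsub] SI DI ab(1,2) by blast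
  qed
  have P1: "\<forall>x\<in>Mcomm_sub G1. \<Lambda> (\<beta>1 x) = \<beta>2 (\<mu> x)" using MT unfolding T_def by blast
  have P2: "\<forall>x\<in>Mcomm_sub G1. \<forall>g1\<in>carrier G1. \<forall>g2\<in>carrier G2.
            \<Lambda> (\<beta>1 g1) = \<beta>2 g2 \<longrightarrow> \<mu> (Mbr G1 x g1) = Mbr G2 (\<mu> x) g2"
  proof (intro ballI impI)
    fix x g1 g2 assume x: "x \<in> Mcomm_sub G1" and g1: "g1 \<in> carrier G1" and g2: "g2 \<in> carrier G2"
      and e: "\<Lambda> (\<beta>1 g1) = \<beta>2 g2"
    have xc: "x \<in> carrier G1" using x M1C by blast
    have mxc: "\<mu> x \<in> carrier G2" using muC[OF x] M2C by blast
    have ex: "\<beta>2 (\<mu> x) = \<Lambda> (\<beta>1 x)" using P1 x by simp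
    have c: "\<mu> (gcomm G1 x g1) = gcomm G2 (\<mu> x) g2" "\<mu> (star G1 x g1) = star G2 (\<mu> x) g2"
      using cond[OF xc g1 mxc g2 ex e[symmetric]] by blast+
    show "\<mu> (Mbr G1 x g1) = Mbr G2 (\<mu> x) g2" unfolding Mbr_def
      using muM[OF star_in_M[OF mG1 xc g1] gcomm_in_M[OF mG1 xc g1]] c by simp
  qed
  have Linj: "inj_on \<Lambda> (carrier K1)" using Lbij unfolding bij_betw_def by blast
  have P3: "\<mu> ` (\<alpha>1 ` carrier H1 \<inter> Mcomm_sub G1) = \<alpha>2 ` carrier H2 \<inter> Mcomm_sub G2"
  proof
    show "\<mu> ` (\<alpha>1 ` carrier H1 \<inter> Mcomm_sub G1) \<subseteq> \<alpha>2 ` carrier H2 \<inter> Mcomm_sub G2"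
    proof
      fix y assume "y \<in> \<mu> ` (\<alpha>1 ` carrier H1 \<inter> Mcomm_sub G1)"
      then obtain x where x: "x \<in> \<alpha>1 ` carrier H1" "x \<in> Mcomm_sub G1" "y = \<mu> x" by blast
      have b1: "\<beta>1 x = \<one>\<^bsub>K1\<^esub>" using x(1) ker1 by blast
      have "\<beta>2 (\<mu> x) = \<one>\<^bsub>K2\<^esub>" using P1 x(2) b1 group_hom.hom_one[OF gL] by metis
      moreover have "\<mu> x \<in> carrier G2" using muC[OF x(2)] M2C by blast
      ultimately have "\<mu> x \<in> \<alpha>2 ` carrier H2" using ker2 by blast
      thus "y \<in> \<alpha>2 ` carrier H2 \<inter> Mcomm_sub G2" using x(3) muC[OF x(2)] by blast
    qed
  next
    show "\<alpha>2 ` carrier H2 \<inter> Mcomm_sub G2 \<subseteq> \<mu> ` (\<alpha>1 ` carrier H1 \<inter> Mcomm_sub G1)"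
    proof
      fix y assume y: "y \<in> \<alpha>2 ` carrier H2 \<inter> Mcomm_sub G2"
      then obtain x where x: "x \<in> Mcomm_sub G1" "y = \<mu> x" using mubij unfolding bij_betw_def by blast
      have xc: "x \<in> carrier G1" using x(1) M1C by blast
      have "\<beta>2 y = \<one>\<^bsub>K2\<^esub>" using y ker2 by blast
      hence "\<Lambda> (\<beta>1 x) = \<Lambda> \<one>\<^bsub>K1\<^esub>" using P1 x group_hom.hom_one[OF gL] by metis
      hence "\<beta>1 x = \<one>\<^bsub>K1\<^esub>"
        using Linj hom_in_carrier[OF b1hom xc] monoid.one_closed[OF group.is_monoid[OF gK1]]
        unfolding inj_on_def by blast
      hence "x \<in> \<alpha>1 ` carrier H1" using ker1 xc by blast
      thus "y \<in> \<mu> ` (\<alpha>1 ` carrier H1 \<inter> Mcomm_sub G1)" using x by blast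
    qed
  qed
  show ?thesis using P1 P2 P3 by blast
qed

end
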